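(* The minimum number of subgraphs in a $\{K_3,K_4\}$-decomposition of $K_{19}$ is $D(19,\{3,4\})=35$, and a $\{K_3,K_4\}$-decomposition of $K_{19}$ attaining this minimum consists of $13$ copies of $K_3$ and $22$ copies of $K_4$.
   Context: A $\{K_3,K_4\}$-decomposition of the complete graph $K_v$ is a collection of subgraphs of $K_v$, each isomorphic to $K_3$ or $K_4$, such that every edge of $K_v$ lies in exactly one of them. $D(v,\{3,4\})$ denotes the minimum number of subgraphs in a $\{K_3,K_4\}$-decomposition of $K_v$. *)

theory Defs
  imports Main
begin

text \<open>A subgraph of K_v isomorphic to K_3 or K_4 is a complete
subgraph, determined by its vertex set (a 3- or 4-element subset). Since each
edge lies in exactly one subgraph, no subgraph occurs twice, so a decomposition
is a set of such vertex sets (blocks).\<close>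

definition K34_decomposition :: "nat \<Rightarrow> nat set set \<Rightarrow> bool" where
  "K34_decomposition v \<B> \<longleftrightarrow>
     (\<forall>B\<in>\<B>. B \<subseteq> {..<v} \<and> (card B = 3 \<or> card B = 4)) \<and>
     (\<forall>x<v. \<forall>y<v. x \<noteq> y \<longrightarrow> (\<exists>!B. B \<in> \<B> \<and> x \<in> B \<and> y \<in> B))"

definition D34 :: "nat \<Rightarrow> nat" where
  "D34 v = Min {card \<B> | \<B>. K34_decomposition v \<B>}"

end

theory Submission
  imports Defs
begin


lemma swap_cnt:
  assumes "finite C" "finite U"
  shows "(\<Sum>x\<in>U. \<Sum>B\<in>{B\<in>C. x\<in>B}. f B) = (\<Sum>B\<in>C. card (B\<inter>U) * f B)"
proof -
  have "(\<Sum>x\<in>U. \<Sum>B\<in>{B\<in>C. x\<in>B}. f B) = (\<Sum>B\<in>C. \<Sum>x\<in>{x\<in>U. x\<in>B}. f B)"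
    using sum.swap_restrict[OF assms(2) assms(1), of "\<lambda>x B. f B" "\<lambda>x B. x\<in>B"] by simp
  also have "\<dots> = (\<Sum>B\<in>C. card (B\<inter>U) * f B)"
  proof (rule sum.cong[OF refl])
    fix B assume "B \<in> C"
    have "{x\<in>U. x\<in>B} = B \<inter> U" by auto
    then show "(\<Sum>x\<in>{x\<in>U. x\<in>B}. f B) = card (B\<inter>U) * f B" by simp
  qed
  finally show ?thesis .
qed

lemma sum_by_val:
  fixes h :: "'a \<Rightarrow> nat" and g :: "nat \<Rightarrow> nat"
  assumes "finite F" "\<forall>B\<in>F. h B \<le> 4"
  shows "(\<Sum>B\<in>F. g (h B)) = g 0 * card {B\<in>F. h B = 0} + g 1 * card {B\<in>F. h B = 1}
     + g 2 * card {B\<in>F. h B = 2} + g 3 * card {B\<in>F. h B = 3} + g 4 * card {B\<in>F. h B = 4}"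
proof -
  have "(\<Sum>B\<in>F. g (h B)) = (\<Sum>i\<in>{..4}. \<Sum>B\<in>{B\<in>F. h B = i}. g (h B))"
    using sum.group[OF assms(1) finite_atMost[of 4], where g=h and h="\<lambda>B. g (h B)"] assms(2)
    by (simp add: image_subset_iff)
  also have "\<dots> = (\<Sum>i\<in>{..4}. g i * card {B\<in>F. h B = i})"
    by (rule sum.cong[OF refl]) (simp add: mult.commute)
  also have "\<dots> = g 0 * card {B\<in>F. h B = 0} + g 1 * card {B\<in>F. h B = 1}
     + g 2 * card {B\<in>F. h B = 2} + g 3 * card {B\<in>F. h B = 3} + g 4 * card {B\<in>F. h B = 4}"
    by (simp add: numeral_eq_Suc atMost_Suc add.commute add.left_commute)
  finally show ?thesis .
qed

lemma sq_ineq: "(i::nat) \<le> 4 \<Longrightarrow> 2*i \<le> i*(i-1)+2"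
proof -
  assume "i \<le> 4"
  then have "i \<in> {0,1,2,3,4}" by auto
  then show ?thesis by auto
qed

context
  fixes v :: nat and BB :: "nat set set"
  assumes dec: "K34_decomposition v BB"
begin

lemma blk:
  assumes "B \<in> BB"
  shows "B \<subseteq> {..<v}" "finite B" "card B = 3 \<or> card B = 4"
  using dec assms unfolding K34_decomposition_def by (auto intro: finite_subset)

lemma finBB: "finite BB"
proof -
  have "BB \<subseteq> Pow {..<v}" using blk(1) by auto
  then show ?thesis by (rule finite_subset) simp
qed

lemma uniq:
  assumes "B\<in>BB" "B'\<in>BB" "x\<in>B" "x\<in>B'" "y\<in>B" "y\<in>B'" "x\<noteq>y"
  shows "B = B'"
proof -
  have "x<v" "y<v" using blk(1) assms by auto
  then have "\<exists>!B. B\<in>BB \<and> x\<in>B \<and> y\<in>B" using dec assms(7) unfolding K34_decomposition_def by blast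
  then show ?thesis using assms by blast
qed

lemma cover: "x<v \<Longrightarrow> y<v \<Longrightarrow> x\<noteq>y \<Longrightarrow> \<exists>B\<in>BB. x\<in>B \<and> y\<in>B"
  using dec unfolding K34_decomposition_def by blast

lemma L1:
  assumes "x<v" "X \<subseteq> {..<v} - {x}"
  shows "card X = (\<Sum>B\<in>{B\<in>BB. x\<in>B}. card (B\<inter>X))"
proof -
  have "X = (\<Union>B\<in>{B\<in>BB. x\<in>B}. B\<inter>X)"
  proof
    show "X \<subseteq> (\<Union>B\<in>{B\<in>BB. x\<in>B}. B\<inter>X)"
    proof
      fix y assume "y\<in>X"
      then have "y<v" "y\<noteq>x" using assms by auto
      then obtain B where "B\<in>BB" "x\<in>B" "y\<in>B" using cover assms(1) by metis
      then show "y \<in> (\<Union>B\<in>{B\<in>BB. x\<in>B}. B\<inter>X)" using \<open>y\<in>X\<close> by auto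
    qed
  qed auto
  moreover have "card (\<Union>B\<in>{B\<in>BB. x\<in>B}. B\<inter>X) = (\<Sum>B\<in>{B\<in>BB. x\<in>B}. card (B\<inter>X))"
  proof (rule card_UN_disjoint)
    show "finite {B\<in>BB. x\<in>B}" using finBB by simp
    show "\<forall>i\<in>{B\<in>BB. x\<in>B}. finite (i\<inter>X)" using blk(2) by auto
    show "\<forall>i\<in>{B\<in>BB. x\<in>B}. \<forall>j\<in>{B\<in>BB. x\<in>B}. i \<noteq> j \<longrightarrow> i\<inter>X \<inter> (j\<inter>X) = {}"
    proof (intro ballI impI)
      fix i j assume ij: "i\<in>{B\<in>BB. x\<in>B}" "j\<in>{B\<in>BB. x\<in>B}" "i\<noteq>j"
      show "i\<inter>X \<inter> (j\<inter>X) = {}"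
      proof (rule ccontr)
        assume "i\<inter>X \<inter> (j\<inter>X) \<noteq> {}"
        then obtain y where "y\<in>i" "y\<in>j" "y\<in>X" by auto
        then have "y \<noteq> x" using assms by auto
        then have "i = j" using uniq[of i j x y] ij \<open>y\<in>i\<close> \<open>y\<in>j\<close> by auto
        then show False using ij by simp
      qed
    qed
  qed
  ultimately show ?thesis by simp
qed

lemma L2:
  assumes "U \<subseteq> {..<v}"
  shows "card U * (card U - 1) = (\<Sum>B\<in>BB. card (B\<inter>U) * (card (B\<inter>U) - 1))"
proof -
  have fU: "finite U" using assms finite_subset by blast
  have "card U * (card U - 1) = (\<Sum>x\<in>U. card (U - {x}))"
    using fU by simp
  also have "\<dots> = (\<Sum>x\<in>U. \<Sum>B\<in>{B\<in>BB. x\<in>B}. card (B\<inter>U) - 1)"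
  proof (rule sum.cong[OF refl])
    fix x assume xU: "x\<in>U"
    have "card (U-{x}) = (\<Sum>B\<in>{B\<in>BB. x\<in>B}. card (B\<inter>(U-{x})))"
      using L1[of x "U-{x}"] assms xU by auto
    also have "\<dots> = (\<Sum>B\<in>{B\<in>BB. x\<in>B}. card (B\<inter>U) - 1)"
    proof (rule sum.cong[OF refl])
      fix B assume "B\<in>{B\<in>BB. x\<in>B}"
      then have "B\<inter>(U-{x}) = (B\<inter>U) - {x}" "x \<in> B\<inter>U" "finite (B\<inter>U)" using xU blk(2) by auto
      then show "card (B\<inter>(U-{x})) = card (B\<inter>U) - 1" by simp
    qed
    finally show "card (U-{x}) = (\<Sum>B\<in>{B\<in>BB. x\<in>B}. card (B\<inter>U) - 1)" .
  qed
  also have "\<dots> = (\<Sum>B\<in>BB. card (B\<inter>U) * (card (B\<inter>U) - 1))"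
    by (rule swap_cnt[OF finBB fU])
  finally show ?thesis .
qed

lemma split34:
  "(\<Sum>B\<in>{B\<in>BB. P B}. g B) = (\<Sum>B\<in>{B\<in>BB. P B \<and> card B = 3}. g B) + (\<Sum>B\<in>{B\<in>BB. P B \<and> card B = 4}. g B)"
proof -
  have e: "{B\<in>BB. P B} = {B\<in>BB. P B \<and> card B = 3} \<union> {B\<in>BB. P B \<and> card B = 4}" using blk(3) by auto
  show ?thesis unfolding e
    by (rule sum.union_disjoint) (use finBB in auto)
qed

lemma deg:
  assumes "x<v"
  shows "2*card {B\<in>BB. x\<in>B \<and> card B = 3} + 3*card {B\<in>BB. x\<in>B \<and> card B = 4} = v - 1"
proof -
  have "v - 1 = card ({..<v} - {x})" using assms by simp
  also have "\<dots> = (\<Sum>B\<in>{B\<in>BB. x\<in>B}. card (B\<inter>({..<v} - {x})))" using L1 assms by blast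
  also have "\<dots> = (\<Sum>B\<in>{B\<in>BB. x\<in>B \<and> card B = 3}. card (B\<inter>({..<v} - {x})))
       + (\<Sum>B\<in>{B\<in>BB. x\<in>B \<and> card B = 4}. card (B\<inter>({..<v} - {x})))" by (rule split34)
  also have "(\<Sum>B\<in>{B\<in>BB. x\<in>B \<and> card B = 3}. card (B\<inter>({..<v} - {x}))) = (\<Sum>B\<in>{B\<in>BB. x\<in>B \<and> card B = 3}. 2)"
  proof (rule sum.cong[OF refl])
    fix B assume B: "B\<in>{B\<in>BB. x\<in>B \<and> card B = 3}"
    then have "B\<inter>({..<v} - {x}) = B - {x}" using blk(1) by auto
    then show "card (B\<inter>({..<v} - {x})) = 2" using B blk(2) by auto
  qed
  also have "(\<Sum>B\<in>{B\<in>BB. x\<in>B \<and> card B = 4}. card (B\<inter>({..<v} - {x}))) = (\<Sum>B\<in>{B\<in>BB. x\<in>B \<and> card B = 4}. 3)"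
  proof (rule sum.cong[OF refl])
    fix B assume B: "B\<in>{B\<in>BB. x\<in>B \<and> card B = 4}"
    then have "B\<inter>({..<v} - {x}) = B - {x}" using blk(1) by auto
    then show "card (B\<inter>({..<v} - {x})) = 3" using B blk(2) by auto
  qed
  finally show ?thesis by simp
qed

lemma glob: "6*card {B\<in>BB. card B = 3} + 12*card {B\<in>BB. card B = 4} = v*(v-1)"
proof -
  have "v*(v-1) = (\<Sum>B\<in>BB. card (B\<inter>{..<v}) * (card (B\<inter>{..<v}) - 1))"
    using L2[of "{..<v}"] by simp
  also have "\<dots> = (\<Sum>B\<in>{B\<in>BB. True}. card (B\<inter>{..<v}) * (card (B\<inter>{..<v}) - 1))" by simp
  also have "\<dots> = (\<Sum>B\<in>{B\<in>BB. True \<and> card B = 3}. card (B\<inter>{..<v}) * (card (B\<inter>{..<v}) - 1))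
     + (\<Sum>B\<in>{B\<in>BB. True \<and> card B = 4}. card (B\<inter>{..<v}) * (card (B\<inter>{..<v}) - 1))" by (rule split34)
  also have "(\<Sum>B\<in>{B\<in>BB. True \<and> card B = 3}. card (B\<inter>{..<v}) * (card (B\<inter>{..<v}) - 1)) = (\<Sum>B\<in>{B\<in>BB. card B = 3}. 6)"
  proof (rule sum.cong)
    fix B assume B: "B\<in>{B\<in>BB. card B = 3}"
    then have "B\<inter>{..<v} = B" using blk(1) by auto
    then show "card (B\<inter>{..<v}) * (card (B\<inter>{..<v}) - 1) = 6" using B by auto
  qed simp
  also have "(\<Sum>B\<in>{B\<in>BB. True \<and> card B = 4}. card (B\<inter>{..<v}) * (card (B\<inter>{..<v}) - 1)) = (\<Sum>B\<in>{B\<in>BB. card B = 4}. 12)"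
  proof (rule sum.cong)
    fix B assume B: "B\<in>{B\<in>BB. card B = 4}"
    then have "B\<inter>{..<v} = B" using blk(1) by auto
    then show "card (B\<inter>{..<v}) * (card (B\<inter>{..<v}) - 1) = 12" using B by auto
  qed simp
  finally show ?thesis by simp
qed

end



definition chk :: "nat \<Rightarrow> nat list list \<Rightarrow> bool" where
 "chk v bs \<longleftrightarrow> list_all (\<lambda>b. distinct b \<and> list_all (\<lambda>x. x < v) b \<and> (length b = 3 \<or> length b = 4)) bs
   \<and> distinct (map set bs)
   \<and> list_all (\<lambda>x. list_all (\<lambda>y. x = y \<or> length (filter (\<lambda>b. x \<in> set b \<and> y \<in> set b) bs) = 1) [0..<v]) [0..<v]"

lemma chk_sound:
  assumes "chk v bs"
  shows "K34_decomposition v (set (map set bs)) \<and> card (set (map set bs)) = length bs"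
proof -
  have A: "\<forall>b\<in>set bs. distinct b \<and> (\<forall>x\<in>set b. x < v) \<and> (length b = 3 \<or> length b = 4)"
   and D: "distinct (map set bs)"
   and P: "\<forall>x<v. \<forall>y<v. x \<noteq> y \<longrightarrow> length (filter (\<lambda>b. x \<in> set b \<and> y \<in> set b) bs) = 1"
    using assms by (auto simp: chk_def list_all_iff atLeast0LessThan)
  have c: "card (set (map set bs)) = length bs" using D distinct_card by fastforce
  have 1: "\<forall>B\<in>set (map set bs). B \<subseteq> {..<v} \<and> (card B = 3 \<or> card B = 4)"
    using A by (auto simp: distinct_card)
  have 2: "\<exists>!B. B \<in> set (map set bs) \<and> x \<in> B \<and> y \<in> B" if "x < v" "y < v" "x \<noteq> y" for x y
  proof -
    have "length (filter (\<lambda>b. x \<in> set b \<and> y \<in> set b) bs) = 1" using P that by blast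
    then obtain b0 where f: "filter (\<lambda>b. x \<in> set b \<and> y \<in> set b) bs = [b0]"
      by (auto simp: length_Suc_conv)
    have "b0 \<in> set (filter (\<lambda>b. x \<in> set b \<and> y \<in> set b) bs)" using f by simp
    then have b0: "b0 \<in> set bs" "x \<in> set b0" "y \<in> set b0" by auto
    show ?thesis
    proof (rule ex1I[of _ "set b0"])
      show "set b0 \<in> set (map set bs) \<and> x \<in> set b0 \<and> y \<in> set b0" using b0 by auto
    next
      fix B assume "B \<in> set (map set bs) \<and> x \<in> B \<and> y \<in> B"
      then obtain b where "b \<in> set bs" "B = set b" "x \<in> set b" "y \<in> set b" by auto
      then have "b \<in> set (filter (\<lambda>b. x \<in> set b \<and> y \<in> set b) bs)" by auto
      then show "B = set b0" using f \<open>B = set b\<close> by auto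
    qed
  qed
  show ?thesis using 1 2 c unfolding K34_decomposition_def by blast
qed

definition sol :: "nat list list" where
 "sol = [[0,1,12,18], [0,2,8,9], [0,3,16,17], [0,4,11,13], [0,5,6,15], [0,7,10,14], [1,2,7,11], [1,3,4,14], [1,5,13,16], [1,6,9,10], [1,8,15,17], [2,3,6,18], [2,4,5,12], [2,10,15,16], [2,13,14,17], [4,8,10,18], [4,7,15], [4,6,17], [4,9,16], [3,10,12,13], [3,9,11,15], [12,14,15], [13,15,18], [7,9,13], [6,8,13], [9,12,17], [3,5,7,8], [7,17,18], [5,9,14,18], [11,16,18], [6,11,14], [8,11,12], [8,14,16], [5,10,11,17], [6,7,12,16]]"

lemma chk_sol: "chk 19 sol"
  unfolding sol_def by code_simp



lemma bound:
  assumes dec: "K34_decomposition 19 BB"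
  shows "card {B\<in>BB. card B = 4} \<le> 22"
proof -
  define T where "T = {B\<in>BB. card B = 3}"
  define F where "F = {B\<in>BB. card B = 4}"
  have finBB: "finite BB" using finBB[OF dec] .
  have finT: "finite T" "finite F" using finBB by (auto simp: T_def F_def)
  have gl: "card T + 2*card F = 57" using glob[OF dec] by (simp add: T_def F_def)
  define t where "t x = card {B\<in>T. x\<in>B}" for x
  define k where "k x = card {B\<in>F. x\<in>B}" for x
  have dg: "2*t x + 3*k x = 18" if "x<19" for x
  proof -
    have "{B\<in>T. x\<in>B} = {B\<in>BB. x\<in>B \<and> card B = 3}" "{B\<in>F. x\<in>B} = {B\<in>BB. x\<in>B \<and> card B = 4}"
      by (auto simp: T_def F_def)
    then show ?thesis using deg[OF dec that] by (simp add: t_def k_def)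
  qed
  define W where "W = \<Union>T"
  define S where "S = {..<19} - W"
  have Bsub: "B \<subseteq> {..<19}" "finite B" if "B\<in>BB" for B using blk[OF dec that] by auto
  have TW: "B \<subseteq> W" if "B\<in>T" for B using that W_def by auto
  have Wsub: "W \<subseteq> {..<19}" using Bsub by (auto simp: W_def T_def)
  have finW: "finite W" "finite S" using Wsub finite_subset by (auto simp: S_def)
  have SW: "S \<inter> W = {}" by (auto simp: S_def)
  have t0: "{B\<in>T. x\<in>B} = {}" if "x\<notin>W" for x using that W_def by auto
  have tpos: "t x \<ge> 1" if xW: "x\<in>W" for x
  proof -
    obtain B where "B\<in>T" "x\<in>B" using xW W_def by auto
    then have "{B\<in>T. x\<in>B} \<noteq> {}" by auto
    then show ?thesis using finT(1) by (simp add: t_def card_gt_0_iff Suc_le_eq)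
  qed
  have t3: "t x \<ge> 3" if "x\<in>W" for x
  proof -
    have "x<19" using Wsub that by auto
    then show ?thesis using dg[of x] tpos[OF that] by presburger
  qed
  have sumt: "(\<Sum>x\<in>{..<19}. t x) = 3*card T"
  proof -
    have "(\<Sum>x\<in>{..<19}. t x) = (\<Sum>x\<in>{..<19}. \<Sum>B\<in>{B\<in>T. x\<in>B}. 1)" by (simp add: t_def)
    also have "\<dots> = (\<Sum>B\<in>T. card (B\<inter>{..<19}) * 1)" by (rule swap_cnt[OF finT(1)]) simp
    also have "\<dots> = (\<Sum>B\<in>T. 3)"
    proof (rule sum.cong[OF refl])
      fix B assume "B\<in>T"
      then have "B\<inter>{..<19} = B" "card B = 3" using Bsub by (auto simp: T_def)
      then show "card (B\<inter>{..<19}) * 1 = 3" by simp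
    qed
    finally show ?thesis by simp
  qed
  have sumtW: "(\<Sum>x\<in>{..<19}. t x) = (\<Sum>x\<in>W. t x)"
    by (rule sum.mono_neutral_right) (use Wsub t0 in \<open>auto simp: t_def simp del: Collect_empty_eq\<close>)
  have splitx: "card (W-{x}) = 2*t x + (\<Sum>B\<in>{B\<in>F. x\<in>B}. card (B\<inter>W) - 1)" if "x\<in>W" for x
  proof -
    have x19: "x<19" using Wsub that by auto
    have "card (W-{x}) = (\<Sum>B\<in>{B\<in>BB. x\<in>B}. card (B\<inter>(W-{x})))"
      using L1[OF dec x19, of "W-{x}"] Wsub by auto
    also have "\<dots> = (\<Sum>B\<in>{B\<in>BB. x\<in>B \<and> card B = 3}. card (B\<inter>(W-{x})))
       + (\<Sum>B\<in>{B\<in>BB. x\<in>B \<and> card B = 4}. card (B\<inter>(W-{x})))" by (rule split34[OF dec])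
    also have "(\<Sum>B\<in>{B\<in>BB. x\<in>B \<and> card B = 3}. card (B\<inter>(W-{x}))) = (\<Sum>B\<in>{B\<in>T. x\<in>B}. 2)"
    proof (rule sum.cong)
      show "{B\<in>BB. x\<in>B \<and> card B = 3} = {B\<in>T. x\<in>B}" by (auto simp: T_def)
      fix B assume B: "B\<in>{B\<in>T. x\<in>B}"
      then have "B\<inter>(W-{x}) = B - {x}" using TW by auto
      then show "card (B\<inter>(W-{x})) = 2" using B Bsub by (auto simp: T_def)
    qed
    also have "(\<Sum>B\<in>{B\<in>BB. x\<in>B \<and> card B = 4}. card (B\<inter>(W-{x}))) = (\<Sum>B\<in>{B\<in>F. x\<in>B}. card (B\<inter>W) - 1)"
    proof (rule sum.cong)
      show "{B\<in>BB. x\<in>B \<and> card B = 4} = {B\<in>F. x\<in>B}" by (auto simp: F_def)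
      fix B assume B: "B\<in>{B\<in>F. x\<in>B}"
      then have "B\<inter>(W-{x}) = (B\<inter>W) - {x}" "x \<in> B\<inter>W" "finite (B\<inter>W)" using that Bsub by (auto simp: F_def)
      then show "card (B\<inter>(W-{x})) = card (B\<inter>W) - 1" by simp
    qed
    finally show ?thesis by (simp add: t_def)
  qed
  have tle: "2*t x \<le> card W - 1" if "x\<in>W" for x
    using splitx[OF that] that finW by simp
  have "3*card W \<le> 3*card T"
  proof -
    have "3*card W = (\<Sum>x\<in>W. 3)" by simp
    also have "\<dots> \<le> (\<Sum>x\<in>W. t x)" by (rule sum_mono) (use t3 in auto)
    finally show ?thesis using sumt sumtW by simp
  qed
  then have WT: "card W \<le> card T" by simp
  show ?thesis unfolding F_def[symmetric]
  proof (rule ccontr)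
    assume "\<not> card F \<le> 22"
    then have "card T \<le> 11" using gl by simp
    then have W11: "card W \<le> 11" using WT by simp
    have tW3: "t x = 3" "k x = 4" if "x\<in>W" for x
    proof -
      have "x<19" using Wsub that by auto
      then show "t x = 3" "k x = 4" using dg[of x] t3[OF that] tle[OF that] W11 by presburger+
    qed
    have "(\<Sum>x\<in>W. t x) = 3*card W" using tW3 by simp
    then have wT: "card W = card T" using sumt sumtW by simp
    define w where "w = card W"
    have godd: "w + 2*card F = 57" using gl wT w_def by simp
    have w7: "w \<ge> 7"
    proof -
      have "card T > 0" using godd wT w_def by presburger
      then obtain B where "B\<in>T" using card_gt_0_iff by (metis ex_in_conv)
      then have "card B = 3" by (simp add: T_def)
      then obtain x where "x\<in>B" by fastforce
      then have "x\<in>W" using \<open>B\<in>T\<close> TW by auto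
      then show ?thesis using tle[of x] tW3[of x] w_def by simp
    qed
    have wcases: "w = 7 \<or> w = 9 \<or> w = 11" using w7 W11 godd w_def by presburger
    have kS: "k x = 6" "x<19" "x\<notin>W" if "x\<in>S" for x
    proof -
      show "x<19" "x\<notin>W" using that by (auto simp: S_def)
      then have "t x = 0" unfolding t_def using t0[OF \<open>x\<notin>W\<close>] by (metis card.empty)
      then show "k x = 6" using dg[OF \<open>x<19\<close>] by simp
    qed
    have cardS: "card S = 19 - w" unfolding S_def w_def using Wsub finW by (simp add: card_Diff_subset)
    have FW: "card (B\<inter>W) + card (B\<inter>S) = 4" "card (B\<inter>W) \<le> 4" if "B\<in>F" for B
    proof -
      have "B\<in>BB" "card B = 4" using that by (auto simp: F_def)
      then have eq: "(B\<inter>W) \<union> (B\<inter>S) = B" and fB: "finite B" using Bsub by (auto simp: S_def)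
      have d: "(B\<inter>W) \<inter> (B\<inter>S) = {}" using SW by auto
      have "card ((B\<inter>W) \<union> (B\<inter>S)) = card (B\<inter>W) + card (B\<inter>S)"
        by (rule card_Un_disjoint) (use fB d in auto)
      then have "card B = card (B\<inter>W) + card (B\<inter>S)" unfolding eq .
      then show "card (B\<inter>W) + card (B\<inter>S) = 4" "card (B\<inter>W) \<le> 4" using \<open>card B = 4\<close> by auto
    qed
    have E1: "(\<Sum>B\<in>F. card (B\<inter>W)) = 4*w"
    proof -
      have "(\<Sum>x\<in>W. \<Sum>B\<in>{B\<in>F. x\<in>B}. 1) = (\<Sum>B\<in>F. card (B\<inter>W) * 1)" by (rule swap_cnt[OF finT(2) finW(1)])
      moreover have "(\<Sum>x\<in>W. \<Sum>B\<in>{B\<in>F. x\<in>B}. (1::nat)) = (\<Sum>x\<in>W. 4)"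
        by (rule sum.cong[OF refl]) (use tW3 in \<open>simp add: k_def\<close>)
      ultimately show ?thesis by (simp add: w_def)
    qed
    have E2: "w*(w-1) = 6*w + (\<Sum>B\<in>F. card (B\<inter>W) * (card (B\<inter>W) - 1))"
    proof -
      have "w*(w-1) = (\<Sum>B\<in>{B\<in>BB. True}. card (B\<inter>W) * (card (B\<inter>W) - 1))" using L2[OF dec Wsub] by (simp add: w_def)
      also have "\<dots> = (\<Sum>B\<in>{B\<in>BB. True \<and> card B = 3}. card (B\<inter>W) * (card (B\<inter>W) - 1))
         + (\<Sum>B\<in>{B\<in>BB. True \<and> card B = 4}. card (B\<inter>W) * (card (B\<inter>W) - 1))" by (rule split34[OF dec])
      also have "(\<Sum>B\<in>{B\<in>BB. True \<and> card B = 3}. card (B\<inter>W) * (card (B\<inter>W) - 1)) = (\<Sum>B\<in>T. 6)"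
      proof (rule sum.cong)
        show "{B\<in>BB. True \<and> card B = 3} = T" by (simp add: T_def)
        fix B assume "B\<in>T"
        then have "B\<inter>W = B" "card B = 3" using TW by (auto simp: T_def)
        then show "card (B\<inter>W) * (card (B\<inter>W) - 1) = 6" by simp
      qed
      also have "{B\<in>BB. True \<and> card B = 4} = F" by (simp add: F_def)
      finally show ?thesis using wT w_def by simp
    qed
    have E3: "(\<Sum>B\<in>{B\<in>F. x\<in>B}. card (B\<inter>W)) = w" if "x\<in>S" for x
    proof -
      have "w = (\<Sum>B\<in>{B\<in>BB. x\<in>B}. card (B\<inter>W))"
        using L1[OF dec kS(2)[OF that], of W] Wsub kS(3)[OF that] w_def by auto
      also have "\<dots> = (\<Sum>B\<in>{B\<in>BB. x\<in>B \<and> card B = 3}. card (B\<inter>W)) + (\<Sum>B\<in>{B\<in>BB. x\<in>B \<and> card B = 4}. card (B\<inter>W))"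
        by (rule split34[OF dec])
      also have "{B\<in>BB. x\<in>B \<and> card B = 3} = {}" using t0[OF kS(3)[OF that]] by (auto simp: T_def)
      also have "{B\<in>BB. x\<in>B \<and> card B = 4} = {B\<in>F. x\<in>B}" by (auto simp: F_def)
      finally show ?thesis by simp
    qed
    have E4: "(\<Sum>B\<in>{B\<in>F. x\<in>B}. card (B\<inter>W)) + 3 = w" if "x\<in>W" for x
    proof -
      have fA: "finite {B\<in>F. x\<in>B}" using finT(2) by simp
      have "(\<Sum>B\<in>{B\<in>F. x\<in>B}. card (B\<inter>W)) = (\<Sum>B\<in>{B\<in>F. x\<in>B}. (card (B\<inter>W) - 1) + 1)"
      proof (rule sum.cong[OF refl])
        fix B assume "B\<in>{B\<in>F. x\<in>B}"
        then have "x \<in> B\<inter>W" "finite (B\<inter>W)" using that Bsub by (auto simp: F_def)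
        then have "card (B\<inter>W) \<ge> 1" by (metis One_nat_def Suc_leI card_gt_0_iff empty_iff)
        then show "card (B\<inter>W) = card (B\<inter>W) - 1 + 1" by simp
      qed
      also have "\<dots> = (\<Sum>B\<in>{B\<in>F. x\<in>B}. card (B\<inter>W) - 1) + (\<Sum>B\<in>{B\<in>F. x\<in>B}. 1)" by (rule sum.distrib)
      also have "(\<Sum>B\<in>{B\<in>F. x\<in>B}. (1::nat)) = k x" by (simp add: k_def)
      finally show ?thesis using splitx[OF that] tW3[OF that] w_def that finW by simp
    qed
    have E5: "2*w*(19-w) \<le> (\<Sum>B\<in>F. (4 - card (B\<inter>W)) * (card (B\<inter>W) * (card (B\<inter>W) - 1) + 2))"
    proof -
      have "2*w*(19-w) = (\<Sum>x\<in>S. 2*w)" using cardS by simp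
      also have "\<dots> \<le> (\<Sum>x\<in>S. \<Sum>B\<in>{B\<in>F. x\<in>B}. card (B\<inter>W) * (card (B\<inter>W) - 1) + 2)"
      proof (rule sum_mono)
        fix x assume "x\<in>S"
        have "2*w = (\<Sum>B\<in>{B\<in>F. x\<in>B}. 2*card (B\<inter>W))" using E3[OF \<open>x\<in>S\<close>] by (simp add: sum_distrib_left[symmetric])
        also have "\<dots> \<le> (\<Sum>B\<in>{B\<in>F. x\<in>B}. card (B\<inter>W) * (card (B\<inter>W) - 1) + 2)"
          by (rule sum_mono) (use FW sq_ineq in auto)
        finally show "2*w \<le> (\<Sum>B\<in>{B\<in>F. x\<in>B}. card (B\<inter>W) * (card (B\<inter>W) - 1) + 2)" .
      qed
      also have "\<dots> = (\<Sum>B\<in>F. card (B\<inter>S) * (card (B\<inter>W) * (card (B\<inter>W) - 1) + 2))"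
        by (rule swap_cnt[OF finT(2) finW(2)])
      also have "\<dots> = (\<Sum>B\<in>F. (4 - card (B\<inter>W)) * (card (B\<inter>W) * (card (B\<inter>W) - 1) + 2))"
      proof (rule sum.cong[OF refl])
        fix B assume "B\<in>F"
        then have "card (B\<inter>S) = 4 - card (B\<inter>W)" using FW by force
        then show "card (B\<inter>S) * (card (B\<inter>W) * (card (B\<inter>W) - 1) + 2) = (4 - card (B\<inter>W)) * (card (B\<inter>W) * (card (B\<inter>W) - 1) + 2)" by simp
      qed
      finally show ?thesis .
    qed
    have FW4: "\<forall>B\<in>F. card (B\<inter>W) \<le> 4" using FW by auto
    define m where "m i = card {B\<in>F. card (B\<inter>W) = i}" for i
    have M0: "card F = m 0 + m 1 + m 2 + m 3 + m 4"
      using sum_by_val[OF finT(2) FW4, where g="\<lambda>_. 1"] by (simp add: m_def)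
    have M1: "4*w = m 1 + 2*m 2 + 3*m 3 + 4*m 4"
      using sum_by_val[OF finT(2) FW4, where g="\<lambda>i. i"] E1 by (simp add: m_def)
    have M2: "w*(w-1) = 6*w + 2*m 2 + 6*m 3 + 12*m 4"
      using sum_by_val[OF finT(2) FW4, where g="\<lambda>i. i*(i-1)"] E2 by (simp add: m_def)
    have M5: "2*w*(19-w) \<le> 8*m 0 + 6*m 1 + 8*m 2 + 8*m 3"
      using sum_by_val[OF finT(2) FW4, where g="\<lambda>i. (4-i)*(i*(i-1)+2)"] E5 by (simp add: m_def)
    have mz: "\<forall>B\<in>F. card (B\<inter>W) \<noteq> i" if "m i = 0" for i
      using that finT(2) by (auto simp: m_def)
    have w11: "w = 11"
    proof -
      { assume "w = 7"
        then have "card F = 25" "m 1 + 2*m 2 + 3*m 3 + 4*m 4 = 28" "2*m 2 + 6*m 3 + 12*m 4 = 0"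
          using godd M1 M2 by simp_all
        then have False using M0 by linarith }
      moreover
      { assume "w = 9"
        then have "card F = 24" "m 1 + 2*m 2 + 3*m 3 + 4*m 4 = 36" "2*m 2 + 6*m 3 + 12*m 4 = 18"
           "180 \<le> 8*m 0 + 6*m 1 + 8*m 2 + 8*m 3"
          using godd M1 M2 M5 by simp_all
        then have False using M0 by linarith }
      ultimately show ?thesis using wcases by blast
    qed
    have L11: "card F = 23" "m 1 + 2*m 2 + 3*m 3 + 4*m 4 = 44" "2*m 2 + 6*m 3 + 12*m 4 = 44"
           "176 \<le> 8*m 0 + 6*m 1 + 8*m 2 + 8*m 3"
      using godd M1 M2 M5 w11 by simp_all
    have a1: "m 1 = 3*m 3 + 8*m 4" "m 1 + 4*m 4 \<le> 4" using L11 M0 by linarith+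
    then have m4: "m 4 = 0" and m3: "m 3 \<le> 1" by presburger+
    have mcase: "(m 1 = 0 \<and> m 3 = 0) \<or> (m 3 = 1 \<and> m 0 = 0)"
    proof (cases "m 3 = 0")
      case True then show ?thesis using a1 m4 by simp
    next
      case False then have "m 3 = 1" using m3 by simp
      then have "m 0 = 0" using a1 m4 L11 M0 by simp
      then show ?thesis using \<open>m 3 = 1\<close> by simp
    qed
    have Sne: "S \<noteq> {}" using cardS w11 by auto
    from mcase show False
    proof
      assume A: "m 1 = 0 \<and> m 3 = 0"
      obtain x where "x\<in>S" using Sne by auto
      have ev: "even (card (B\<inter>W))" if "B\<in>{B\<in>F. x\<in>B}" for B
      proof -
        have "B\<in>F" using that by simp
        then have "card (B\<inter>W) \<le> 4" "card (B\<inter>W) \<noteq> 1" "card (B\<inter>W) \<noteq> 3" using FW mz A by auto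
        then have "card (B\<inter>W) \<in> {0,2,4}" by auto
        then show ?thesis by auto
      qed
      have "even (\<Sum>B\<in>{B\<in>F. x\<in>B}. card (B\<inter>W))" by (rule dvd_sum) (use ev in auto)
      then show False using E3[OF \<open>x\<in>S\<close>] w11 by simp
    next
      assume A: "m 3 = 1 \<and> m 0 = 0"
      have "card {B\<in>F. card (B\<inter>W) = 3} = 1" using A by (simp add: m_def)
      then obtain B3 where B3e: "{B\<in>F. card (B\<inter>W) = 3} = {B3}" by (rule card_1_singletonE)
      then have B3: "B3 \<in> F" "card (B3\<inter>W) = 3" by auto
      have only3: "B = B3" if "B\<in>F" "card (B\<inter>W) = 3" for B using B3e that by auto
      have vals: "card (B\<inter>W) \<in> {1,2,3}" if "B\<in>F" for B
      proof -
        have "card (B\<inter>W) \<le> 4" "card (B\<inter>W) \<noteq> 0" "card (B\<inter>W) \<noteq> 4"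
          using FW[OF that] mz[of 0] mz[of 4] A m4 that by auto
        then show ?thesis by auto
      qed
      have "card (B3\<inter>S) = 1" using FW(1)[OF B3(1)] B3(2) by simp
      then obtain s0 where s0: "B3\<inter>S = {s0}" by (rule card_1_singletonE)
      then have s0S: "s0\<in>S" "s0\<in>B3" by auto
      define A0 where "A0 = {B\<in>F. s0\<in>B}"
      have fA0: "finite A0" using finT(2) by (simp add: A0_def)
      have cA0: "card A0 = 6" using kS(1)[OF s0S(1)] by (simp add: A0_def k_def)
      have B3A: "B3 \<in> A0" using B3 s0S by (simp add: A0_def)
      have sA0: "(\<Sum>B\<in>A0. card (B\<inter>W)) = 11" using E3[OF s0S(1)] w11 by (simp add: A0_def)
      have "\<exists>B1\<in>A0. card (B1\<inter>W) = 1"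
      proof (rule ccontr)
        assume "\<not> (\<exists>B1\<in>A0. card (B1\<inter>W) = 1)"
        then have two: "card (B\<inter>W) = 2" if "B\<in>A0-{B3}" for B
          using that vals only3 by (fastforce simp: A0_def)
        have "(\<Sum>B\<in>A0. card (B\<inter>W)) = card (B3\<inter>W) + (\<Sum>B\<in>A0-{B3}. card (B\<inter>W))"
          by (rule sum.remove[OF fA0 B3A])
        also have "(\<Sum>B\<in>A0-{B3}. card (B\<inter>W)) = (\<Sum>B\<in>A0-{B3}. 2)"
          by (rule sum.cong[OF refl]) (use two in auto)
        finally have "(\<Sum>B\<in>A0. card (B\<inter>W)) = 3 + 2*card (A0-{B3})" using B3 by simp
        then show False using sA0 cA0 B3A fA0 by simp
      qed
      then obtain B1 where B1: "B1\<in>A0" "card (B1\<inter>W) = 1" by blast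
      have B1F: "B1\<in>F" "s0\<in>B1" using B1 by (auto simp: A0_def)
      have "B1 \<noteq> B3" using B1 B3 by auto
      obtain u where u: "B1\<inter>W = {u}" using B1(2) by (rule card_1_singletonE)
      then have uW: "u\<in>W" "u\<in>B1" by auto
      have "u\<in>B3"
      proof (rule ccontr)
        assume nu: "u\<notin>B3"
        define Au where "Au = {B\<in>F. u\<in>B}"
        have fAu: "finite Au" using finT(2) by (simp add: Au_def)
        have cAu: "card Au = 4" using tW3(2)[OF uW(1)] by (simp add: Au_def k_def)
        have B1A: "B1\<in>Au" using B1F uW by (simp add: Au_def)
        have le2: "card (B\<inter>W) \<le> 2" if "B\<in>Au" for B
        proof -
          have "B\<in>F" "u\<in>B" using that by (auto simp: Au_def)
          then have "B \<noteq> B3" using nu by auto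
          then show ?thesis using vals[OF \<open>B\<in>F\<close>] only3[OF \<open>B\<in>F\<close>] by auto
        qed
        have eqs: "(\<Sum>B\<in>Au. card (B\<inter>W)) = card (B1\<inter>W) + (\<Sum>B\<in>Au-{B1}. card (B\<inter>W))"
          by (rule sum.remove[OF fAu B1A])
        have "(\<Sum>B\<in>Au-{B1}. card (B\<inter>W)) \<le> (\<Sum>B\<in>Au-{B1}. 2)" by (rule sum_mono) (use le2 in auto)
        then have "(\<Sum>B\<in>Au. card (B\<inter>W)) \<le> 1 + 2*card (Au-{B1})" using eqs B1 by simp
        then show False using E4[OF uW(1)] w11 cAu B1A fAu by (simp add: Au_def)
      qed
      moreover have "s0 \<noteq> u" using s0S uW SW by auto
      moreover have "B1\<in>BB" "B3\<in>BB" using B1F B3 by (auto simp: F_def)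
      ultimately have "B1 = B3" using uniq[OF dec, of B1 B3 s0 u] B1F s0S uW by auto
      then show False using \<open>B1 \<noteq> B3\<close> by simp
    qed
  qed
qed

theorem mainTheorem2:
  shows "D34 19 = 35 \<and>
         (\<exists>\<B>. K34_decomposition 19 \<B> \<and> card \<B> = 35) \<and>
         (\<forall>\<B>. K34_decomposition 19 \<B> \<and> card \<B> = 35 \<longrightarrow>
              card {B \<in> \<B>. card B = 3} = 13 \<and> card {B \<in> \<B>. card B = 4} = 22)"
  proof -
  have cnt: "card BB = card {B\<in>BB. card B = 3} + card {B\<in>BB. card B = 4}"
    if d: "K34_decomposition 19 BB" for BB
    using split34[OF d, where P="\<lambda>_. True" and g="\<lambda>_. (1::nat)"] by simp
  have lb: "35 \<le> card BB \<and> card BB \<le> 57 \<and> (card BB = 35 \<longrightarrow>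
      card {B\<in>BB. card B = 3} = 13 \<and> card {B\<in>BB. card B = 4} = 22)"
    if d: "K34_decomposition 19 BB" for BB
    using cnt[OF d] glob[OF d] bound[OF d] by simp
  define E where "E = set (map set sol)"
  have ex: "K34_decomposition 19 E \<and> card E = 35"
    using chk_sound[OF chk_sol] by (simp add: E_def sol_def)
  have fin: "finite {card \<B> |\<B>. K34_decomposition 19 \<B>}"
  proof (rule finite_subset[of _ "{..57::nat}"])
    show "{card \<B> |\<B>. K34_decomposition 19 \<B>} \<subseteq> {..57}" using lb by auto
  qed simp
  have D: "D34 19 = 35"
    unfolding D34_def by (rule Min_eqI[OF fin]) (use lb ex in auto)
  show ?thesis using D ex lb by blast
qed

end
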